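(* Let $n>1$ be an integer and $N=2n-1$. Then there exists a Jacobi matrix $J$ of order $N+1$ that realizes perfect state transfer, with earliest transfer time $T_0$, and has Early State Exclusion. Moreover, for any given positive integer $m$, such a Jacobi matrix $J$ of order $N+1$ can be constructed so that it has $m$ cases of Early State Exclusion, i.e., there exist $m$ distinct times $t_1,\dots,t_m$ with $0<t_j<T_0$ and $(e^{-iJt_j}\mathbf{e}_0,\mathbf{e}_0)_{\mathbb{C}^{N+1}}=0$ for $j=1,\dots,m$.
   Context: A Jacobi matrix of order $N+1$ is a real symmetric tridiagonal $(N+1)\times(N+1)$ matrix $J$ with diagonal entries $a_0,\dots,a_N\in\mathbb{R}$ and off-diagonal entries $b_0,\dots,b_{N-1}>0$. Let $\mathbf{e}_0,\dots,\mathbf{e}_N$ be the standard basis of $\mathbb{C}^{N+1}$. $J$ realizes perfect state transfer (PST) at time $T>0$ if $e^{-iTJ}\mathbf{e}_0=e^{i\phi}\mathbf{e}_N$ for some $\phi\in\mathbb{R}$. If $T_0$ is the earliest (smallest positive) such time, $J$ is said to have Early State Exclusion (ESE) at time $t$ if $0<t<T_0$ and $(e^{-iJt}\mathbf{e}_0,\mathbf{e}_0)_{\mathbb{C}^{N+1}}=0$. *)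

theory Defs
  imports "HOL-Analysis.Analysis"
begin

text \<open>Matrices of order N+1 are represented as functions nat => nat => real,
  with indices 0..N; vectors in C^(N+1) as functions nat => complex
  (only the entries with index <= N matter).\<close>

definition jacobi_matrix :: "nat \<Rightarrow> (nat \<Rightarrow> real) \<Rightarrow> (nat \<Rightarrow> real) \<Rightarrow> nat \<Rightarrow> nat \<Rightarrow> real" where
  "jacobi_matrix N a b i j =
     (if i \<le> N \<and> j \<le> N then
        (if i = j then a i else if j = i + 1 then b i else if i = j + 1 then b j else 0)
      else 0)"

definition is_jacobi :: "nat \<Rightarrow> (nat \<Rightarrow> real) \<Rightarrow> bool" where
  "is_jacobi N b \<longleftrightarrow> (\<forall>i<N. b i > 0)"

definition mat_vec :: "nat \<Rightarrow> (nat \<Rightarrow> nat \<Rightarrow> real) \<Rightarrow> (nat \<Rightarrow> complex) \<Rightarrow> nat \<Rightarrow> complex" where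
  "mat_vec N M v i = (\<Sum>j\<le>N. complex_of_real (M i j) * v j)"

definition basis_vec :: "nat \<Rightarrow> nat \<Rightarrow> complex" where
  "basis_vec k i = (if i = k then 1 else 0)"

definition evol :: "nat \<Rightarrow> (nat \<Rightarrow> nat \<Rightarrow> real) \<Rightarrow> real \<Rightarrow> (nat \<Rightarrow> complex) \<Rightarrow> nat \<Rightarrow> complex" where
  "evol N M t v i = (\<Sum>k. ((- \<i> * complex_of_real t) ^ k / of_nat (fact k)) * ((mat_vec N M ^^ k) v) i)"

definition inner_C :: "nat \<Rightarrow> (nat \<Rightarrow> complex) \<Rightarrow> (nat \<Rightarrow> complex) \<Rightarrow> complex" where
  "inner_C N u v = (\<Sum>i\<le>N. u i * cnj (v i))"

definition PST :: "nat \<Rightarrow> (nat \<Rightarrow> nat \<Rightarrow> real) \<Rightarrow> real \<Rightarrow> bool" where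
  "PST N M T \<longleftrightarrow> T > 0 \<and>
     (\<exists>\<phi>::real. \<forall>i\<le>N. evol N M T (basis_vec 0) i = exp (\<i> * complex_of_real \<phi>) * basis_vec N i)"

definition earliest_PST :: "nat \<Rightarrow> (nat \<Rightarrow> nat \<Rightarrow> real) \<Rightarrow> real \<Rightarrow> bool" where
  "earliest_PST N M T0 \<longleftrightarrow> PST N M T0 \<and> (\<forall>T. 0 < T \<and> T < T0 \<longrightarrow> \<not> PST N M T)"

definition ESE :: "nat \<Rightarrow> (nat \<Rightarrow> nat \<Rightarrow> real) \<Rightarrow> real \<Rightarrow> real \<Rightarrow> bool" where
  "ESE N M T0 t \<longleftrightarrow> 0 < t \<and> t < T0 \<and> inner_C N (evol N M t (basis_vec 0)) (basis_vec 0) = 0"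

end

theory Submission
  imports Defs "HOL-Computational_Algebra.Polynomial"
begin


locale lanczos =
  fixes N :: nat and x :: "nat \<Rightarrow> real" and w :: "nat \<Rightarrow> real"
  assumes x_inj: "inj_on x {..N}"
    and w_pos: "\<And>k. k \<le> N \<Longrightarrow> w k > 0"
    and w_sum: "(\<Sum>k\<le>N. w k) = 1"
begin

definition ipv :: "(nat \<Rightarrow> real) \<Rightarrow> real poly \<Rightarrow> real" where
  "ipv v q = (\<Sum>k\<le>N. w k * v k * poly q (x k))"

definition ip :: "real poly \<Rightarrow> real poly \<Rightarrow> real" where
  "ip p q = ipv (\<lambda>k. poly p (x k)) q"

definition nz :: "real poly \<Rightarrow> real poly" where
  "nz r = smult (1 / sqrt (ip r r)) r"

fun P :: "nat \<Rightarrow> real poly" where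
  "P 0 = 1"
| "P (Suc i) = nz ([:0,1:] * P i - smult (ip ([:0,1:] * P i) (P i)) (P i)
      - (if i = 0 then 0 else smult (ip ([:0,1:] * P i) (P (i - 1))) (P (i - 1))))"

definition a :: "nat \<Rightarrow> real" where "a i = ip ([:0,1:] * P i) (P i)"
definition b :: "nat \<Rightarrow> real" where "b i = ip ([:0,1:] * P (Suc i)) (P i)"

definition R :: "nat \<Rightarrow> real poly" where
  "R i = [:0,1:] * P i - smult (a i) (P i) - (if i = 0 then 0 else smult (b (i - 1)) (P (i - 1)))"

lemma P_Suc: "P (Suc i) = nz (R i)"
  by (cases i) (simp_all add: R_def a_def b_def)

declare P.simps(2)[simp del]

lemma ip_sym: "ip p q = ip q p"
  unfolding ip_def ipv_def by (simp add: mult_ac)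

lemma ip_X: "ip ([:0,1:] * p) q = ip p ([:0,1:] * q)"
  unfolding ip_def ipv_def by (simp add: mult_ac)

lemma ip_add: "ip (p + q) r = ip p r + ip q r"
  unfolding ip_def ipv_def by (simp add: algebra_simps sum.distrib)
lemma ip_diff: "ip (p - q) r = ip p r - ip q r"
  unfolding ip_def ipv_def by (simp add: algebra_simps sum_subtractf)
lemma ip_smult: "ip (smult c p) r = c * ip p r"
  unfolding ip_def ipv_def by (simp add: algebra_simps sum_distrib_left)
lemma ip_zero[simp]: "ip 0 r = 0"
  unfolding ip_def ipv_def by simp
lemma ip_add2: "ip r (p + q) = ip r p + ip r q"
  using ip_add ip_sym by metis
lemma ip_diff2: "ip r (p - q) = ip r p - ip r q"
  using ip_diff ip_sym by metis
lemma ip_smult2: "ip r (smult c p) = c * ip r p"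
  using ip_smult ip_sym by metis
lemma ip_zero2[simp]: "ip r 0 = 0"
  using ip_zero ip_sym by metis

lemma term_nonneg: "k \<le> N \<Longrightarrow> 0 \<le> w k * (c::real) * c"
  using w_pos by (metis less_imp_le mult.assoc mult_nonneg_nonneg zero_le_square)

lemma ip_self_nonneg: "ip p p \<ge> 0"
  unfolding ip_def ipv_def using term_nonneg by (intro sum_nonneg) simp

lemma ip_self_pos:
  assumes "k \<le> N" "poly p (x k) \<noteq> 0"
  shows "ip p p > 0"
proof -
  have "0 < w k * poly p (x k) * poly p (x k)" using w_pos[OF assms(1)] assms(2)
    by (metis mult.assoc mult_pos_pos not_real_square_gt_zero)
  also have "\<dots> \<le> ip p p" unfolding ip_def ipv_def
    using assms(1) term_nonneg by (intro member_le_sum) auto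
  finally show ?thesis .
qed

lemma nonvanish:
  assumes "p \<noteq> 0" "degree p \<le> N"
  shows "\<exists>k\<le>N. poly p (x k) \<noteq> 0"
proof (rule ccontr)
  assume "\<not> ?thesis"
  then have "x ` {..N} \<subseteq> {y. poly p y = 0}" by auto
  then have "card (x ` {..N}) \<le> card {y. poly p y = 0}"
    using poly_roots_finite[OF assms(1)] by (intro card_mono) auto
  also have "\<dots> \<le> degree p" by (rule card_poly_roots_bound[OF assms(1)])
  finally show False using card_image[OF x_inj] assms(2) by simp
qed

definition Hyp :: "nat \<Rightarrow> bool" where
  "Hyp i \<longleftrightarrow> (\<forall>j\<le>i. degree (P j) = j) \<and>
     (\<forall>j\<le>i. \<forall>l\<le>i. ip (P j) (P l) = (if j = l then 1 else 0)) \<and>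
     (\<forall>j<i. b j > 0 \<and> R j = smult (b j) (P (Suc j)))"

lemma XP_eq: "[:0,1:] * P j = R j + smult (a j) (P j) + (if j = 0 then 0 else smult (b (j - 1)) (P (j - 1)))"
  unfolding R_def by simp

lemma R_orth:
  assumes H: "Hyp i" and j: "j \<le> i"
  shows "ip (R i) (P j) = 0"
proof -
  have orth: "\<And>j l. j \<le> i \<Longrightarrow> l \<le> i \<Longrightarrow> ip (P j) (P l) = (if j = l then 1 else 0)"
    using H unfolding Hyp_def by blast
  have ipR: "ip (R i) (P j) = ip ([:0,1:] * P i) (P j) - a i * ip (P i) (P j)
      - (if i = 0 then 0 else b (i - 1) * ip (P (i - 1)) (P j))"
    unfolding R_def by (simp add: ip_diff ip_smult)
  show ?thesis
  proof (cases "j = i")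
    case True
    then show ?thesis using ipR orth[of i i] orth[of "i - 1" i] by (cases i) (auto simp: a_def)
  next
    case False
    with j have ji: "j < i" by simp
    have Rj: "R j = smult (b j) (P (Suc j))" using H ji unfolding Hyp_def by blast
    have "ip ([:0,1:] * P i) (P j) = ip (P i) ([:0,1:] * P j)" by (rule ip_X)
    also have "\<dots> = b j * ip (P i) (P (Suc j)) + a j * ip (P i) (P j)
        + (if j = 0 then 0 else b (j - 1) * ip (P i) (P (j - 1)))"
      unfolding XP_eq Rj by (simp add: ip_add2 ip_smult2)
    also have "\<dots> = (if i = Suc j then b j else 0)"
      using orth[of i "Suc j"] orth[of i j] orth[of i "j - 1"] ji by auto
    finally have 1: "ip ([:0,1:] * P i) (P j) = (if i = Suc j then b j else 0)" .
    show ?thesis using ipR 1 orth[of i j] orth[of "i - 1" j] ji by auto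
  qed
qed

lemma Hyp_0: "Hyp 0"
proof -
  have "ip 1 1 = 1" unfolding ip_def ipv_def using w_sum by simp
  then show ?thesis unfolding Hyp_def by simp
qed

lemma Hyp_Suc:
  assumes H: "Hyp i" and iN: "Suc i \<le> N"
  shows "Hyp (Suc i)"
proof -
  have deg: "\<And>j. j \<le> i \<Longrightarrow> degree (P j) = j" using H unfolding Hyp_def by blast
  have orth: "\<And>j l. j \<le> i \<Longrightarrow> l \<le> i \<Longrightarrow> ip (P j) (P l) = (if j = l then 1 else 0)"
    using H unfolding Hyp_def by blast
  have Pi0: "P i \<noteq> 0" using orth[of i i] by auto
  define Q where "Q = smult (a i) (P i) + (if i = 0 then 0 else smult (b (i - 1)) (P (i - 1)))"
  have RQ: "R i = pCons 0 (P i) - Q" unfolding R_def Q_def by simp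
  have degQ: "degree Q \<le> i" unfolding Q_def
    by (rule order.trans[OF degree_add_le]) (auto intro: order.trans[OF degree_smult_le] simp: deg)
  have degR: "degree (R i) = Suc i"
    unfolding RQ diff_conv_add_uminus using degQ Pi0 deg[of i] by (subst degree_add_eq_left) auto
  then have R0: "R i \<noteq> 0" by auto
  obtain k where k: "k \<le> N" "poly (R i) (x k) \<noteq> 0" using nonvanish[OF R0] degR iN by auto
  define s where "s = ip (R i) (R i)"
  have s0: "s > 0" unfolding s_def by (rule ip_self_pos[OF k])
  have PS: "P (Suc i) = smult (1 / sqrt s) (R i)" unfolding P_Suc nz_def s_def ..
  have degS: "degree (P (Suc i)) = Suc i" unfolding PS using s0 degR by simp
  have orthS: "ip (P (Suc i)) (P j) = 0" if "j \<le> i" for j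
    unfolding PS ip_smult using R_orth[OF H that] by simp
  have normS: "ip (P (Suc i)) (P (Suc i)) = 1"
    unfolding PS ip_smult ip_smult2 using s0 by (simp add: s_def[symmetric])
  have "b i = ip (P (Suc i)) ([:0,1:] * P i)" unfolding b_def by (rule ip_X)
  also have "\<dots> = ip (P (Suc i)) (R i) + ip (P (Suc i)) Q"
    unfolding XP_eq Q_def by (simp add: ip_add2 add.assoc)
  also have "ip (P (Suc i)) Q = 0" unfolding Q_def
    using orthS[of i] orthS[of "i - 1"] by (simp add: ip_add2 ip_smult2)
  also have "ip (P (Suc i)) (R i) = sqrt s"
    unfolding PS ip_smult using s0 by (simp add: s_def[symmetric] real_div_sqrt)
  finally have bi: "b i = sqrt s" by simp
  have Ri: "R i = smult (b i) (P (Suc i))" unfolding PS bi using s0 by simp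
  show ?thesis unfolding Hyp_def
  proof (intro conjI allI impI)
    fix j assume "j \<le> Suc i" then show "degree (P j) = j"
      using deg degS by (cases "j = Suc i") auto
  next
    fix j l assume "j \<le> Suc i" "l \<le> Suc i"
    then show "ip (P j) (P l) = (if j = l then 1 else 0)"
    proof -
      consider "j = Suc i \<and> l = Suc i" | "j = Suc i \<and> l \<le> i" | "j \<le> i \<and> l = Suc i" | "j \<le> i \<and> l \<le> i"
        using \<open>j \<le> Suc i\<close> \<open>l \<le> Suc i\<close> by linarith
      then show ?thesis
        by cases (use orth orthS normS ip_sym[of "P j" "P l"] in auto)
    qed
  next
    fix j assume "j < Suc i" then show "0 < b j"
      using H bi s0 unfolding Hyp_def by (cases "j = i") auto
  next
    fix j assume "j < Suc i" then show "R j = smult (b j) (P (Suc j))"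
      using H Ri unfolding Hyp_def by (cases "j = i") auto
  qed
qed

lemma Hyp_N: "Hyp N"
proof -
  have "i \<le> N \<Longrightarrow> Hyp i" for i
    by (induction i) (auto intro: Hyp_0 Hyp_Suc)
  then show ?thesis by simp
qed

lemma ipv_diff: "ipv v (p - q) = ipv v p - ipv v q"
  unfolding ipv_def by (simp add: algebra_simps sum_subtractf)
lemma ipv_smult: "ipv v (smult c p) = c * ipv v p"
  unfolding ipv_def by (simp add: algebra_simps sum_distrib_left)
lemma ipv_sum: "ipv v (\<Sum>l\<in>A. f l) = (\<Sum>l\<in>A. ipv v (f l))"
  unfolding ipv_def poly_sum by (simp add: sum_distrib_left sum.swap[of _ A])

lemma degN: "j \<le> N \<Longrightarrow> degree (P j) = j"
  using Hyp_N unfolding Hyp_def by blast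
lemma orthN: "j \<le> N \<Longrightarrow> l \<le> N \<Longrightarrow> ip (P j) (P l) = (if j = l then 1 else 0)"
  using Hyp_N unfolding Hyp_def by blast
lemma bN: "j < N \<Longrightarrow> b j > 0"
  using Hyp_N unfolding Hyp_def by blast
lemma RN: "j < N \<Longrightarrow> R j = smult (b j) (P (Suc j))"
  using Hyp_N unfolding Hyp_def by blast

lemma span_orth:
  assumes "\<forall>j\<le>i. ipv v (P j) = 0" "i \<le> N" "degree q \<le> i"
  shows "ipv v q = 0"
  using assms
proof (induction i arbitrary: q)
  case 0
  then have "q = smult (coeff q 0) (P 0)" by (auto elim!: degree_eq_zeroE)
  then have "ipv v q = coeff q 0 * ipv v (P 0)" by (metis ipv_smult)
  then show ?case using 0 by simp
next
  case (Suc i)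
  have dS: "degree (P (Suc i)) = Suc i" using degN Suc.prems by simp
  then have "P (Suc i) \<noteq> 0" by (metis degree_0 nat.simps(3))
  then have lc: "lead_coeff (P (Suc i)) \<noteq> 0" by simp
  define c where "c = coeff q (Suc i) / lead_coeff (P (Suc i))"
  define q' where "q' = q - smult c (P (Suc i))"
  have "degree q' \<le> i"
  proof (rule degree_le, intro allI impI)
    fix m assume "i < m"
    show "coeff q' m = 0"
    proof (cases "m = Suc i")
      case True then show ?thesis unfolding q'_def c_def using lc dS by simp
    next
      case False
      then have "m > Suc i" using \<open>i < m\<close> by simp
      then show ?thesis unfolding q'_def using Suc.prems dS
        by (simp add: coeff_eq_0)
    qed
  qed
  then have "ipv v q' = 0" using Suc.IH Suc.prems by simp
  moreover have "ipv v q' = ipv v q - c * ipv v (P (Suc i))"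
    unfolding q'_def ipv_diff ipv_smult ..
  moreover have "ipv v (P (Suc i)) = 0" using Suc.prems(1) by blast
  ultimately show ?case by simp
qed

definition L :: "nat \<Rightarrow> real poly" where
  "L k = (\<Prod>l\<in>{..N} - {k}. [:- x l, 1:])"

lemma degL: "k \<le> N \<Longrightarrow> degree (L k) \<le> N"
proof -
  assume kN: "k \<le> N"
  have "degree (L k) \<le> (\<Sum>l\<in>{..N} - {k}. degree [:- x l, 1:])"
    unfolding L_def using degree_prod_sum_le[of "{..N} - {k}" "\<lambda>l. [:- x l, 1:]"] by (simp add: o_def)
  also have "\<dots> = card ({..N} - {k})" by simp
  also have "\<dots> = N" using kN by (subst card_Diff_singleton) auto
  finally show ?thesis .
qed

lemma polyL: "poly (L k) y = (\<Prod>l\<in>{..N} - {k}. y - x l)"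
  unfolding L_def poly_prod by simp

lemma polyL_self: "k \<le> N \<Longrightarrow> poly (L k) (x k) \<noteq> 0"
  unfolding polyL using x_inj by (auto simp: inj_on_def)

lemma polyL_other: "l \<le> N \<Longrightarrow> l \<noteq> k \<Longrightarrow> poly (L k) (x l) = 0"
  unfolding polyL by (rule prod_zero) auto

lemma vanish:
  assumes "\<forall>q. degree q \<le> N \<longrightarrow> ipv v q = 0" "k \<le> N"
  shows "v k = 0"
proof -
  have "ipv v (L k) = (\<Sum>l\<le>N. if l = k then w k * v k * poly (L k) (x k) else 0)"
    unfolding ipv_def by (intro sum.cong) (auto simp: polyL_other)
  also have "\<dots> = w k * v k * poly (L k) (x k)" using assms(2) by simp
  finally have "w k * v k * poly (L k) (x k) = 0" using assms degL by simp
  then show ?thesis using w_pos[OF assms(2)] polyL_self[OF assms(2)] by simp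
qed

lemma vanish_P:
  assumes "\<forall>j\<le>N. ipv v (P j) = 0" "k \<le> N"
  shows "v k = 0"
  using vanish span_orth assms by blast

lemma RN_vanish: "k \<le> N \<Longrightarrow> poly (R N) (x k) = 0"
  using vanish_P[of "\<lambda>k. poly (R N) (x k)" k] R_orth[OF Hyp_N] by (simp add: ip_def)

lemma coeffL: "k \<le> N \<Longrightarrow> coeff (L k) N = 1"
proof -
  assume kN: "k \<le> N"
  have "degree (L k) = (\<Sum>l\<in>{..N} - {k}. degree [:- x l, 1:])"
    unfolding L_def by (rule degree_prod_eq_sum_degree) auto
  also have "\<dots> = card ({..N} - {k})" by simp
  also have "\<dots> = N" using kN by (subst card_Diff_singleton) auto
  finally have d: "degree (L k) = N" .
  have "lead_coeff (L k) = 1" unfolding L_def lead_coeff_prod by simp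
  then show ?thesis using d by simp
qed

lemma lagrange:
  assumes "degree q < N"
  shows "(\<Sum>k\<le>N. poly q (x k) / poly (L k) (x k)) = 0"
proof -
  define I where "I = (\<Sum>k\<le>N. smult (poly q (x k) / poly (L k) (x k)) (L k))"
  have ev: "poly I (x l) = poly q (x l)" if l: "l \<le> N" for l
  proof -
    have "poly I (x l) = (\<Sum>k\<le>N. if k = l then poly q (x l) else 0)"
      unfolding I_def poly_sum
      by (intro sum.cong) (use l polyL_self polyL_other in auto)
    then show ?thesis using l by simp
  qed
  have dI: "degree I \<le> N" unfolding I_def
    by (intro degree_sum_le) (auto intro: order.trans[OF degree_smult_le] degL)
  have cA: "card (x ` {..N}) = Suc N" using card_image[OF x_inj] by simp
  have "I = q"
    by (rule poly_eqI_degree[of "x ` {..N}"]) (use ev dI cA assms in auto)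
  then have "coeff I N = 0" using assms by (simp add: coeff_eq_0)
  moreover have "coeff I N = (\<Sum>k\<le>N. poly q (x k) / poly (L k) (x k))"
    unfolding I_def coeff_sum by (intro sum.cong) (auto simp: coeffL)
  ultimately show ?thesis by simp
qed

lemma PN_vector:
  assumes orth: "\<forall>q. degree q < N \<longrightarrow> ipv s q = 0"
    and norm: "(\<Sum>k\<le>N. w k * s k * s k) = 1"
  shows "\<exists>c. (c = 1 \<or> c = -1) \<and> (\<forall>k\<le>N. s k = c * poly (P N) (x k))"
proof -
  define c where "c = ipv s (P N)"
  define d where "d = (\<lambda>k. s k - c * poly (P N) (x k))"
  have ipd: "ipv d q = ipv s q - c * ip (P N) q" for q
    unfolding d_def ipv_def ip_def by (simp add: algebra_simps sum_subtractf sum_distrib_left)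
  have "\<forall>j\<le>N. ipv d (P j) = 0"
  proof (intro allI impI)
    fix j assume j: "j \<le> N"
    show "ipv d (P j) = 0"
    proof (cases "j = N")
      case True then show ?thesis using ipd orthN[of N N] c_def by simp
    next
      case False
      then have "degree (P j) < N" using degN j by simp
      then show ?thesis using ipd orth orthN[of N j] j False by simp
    qed
  qed
  then have d0: "\<And>k. k \<le> N \<Longrightarrow> d k = 0" using vanish_P by blast
  then have sk: "\<And>k. k \<le> N \<Longrightarrow> s k = c * poly (P N) (x k)" unfolding d_def by simp
  have "1 = (\<Sum>k\<le>N. w k * (c * poly (P N) (x k)) * (c * poly (P N) (x k)))"
    using norm sk by (metis (no_types, lifting) atMost_iff sum.cong)
  also have "\<dots> = c * c * ip (P N) (P N)" unfolding ip_def ipv_def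
    by (simp add: sum_distrib_left algebra_simps)
  also have "\<dots> = c * c" using orthN[of N N] by simp
  finally have "c * c = 1" by simp
  then have "c = 1 \<or> c = -1" by (metis mult_cancel_left1 square_eq_1_iff)
  then show ?thesis using sk by blast
qed

end


lemma mat_vec_jacobi:
  assumes "i \<le> N"
  shows "mat_vec N (jacobi_matrix N a b) v i =
    (if i = 0 then 0 else complex_of_real (b (i - 1)) * v (i - 1)) + complex_of_real (a i) * v i
    + (if i < N then complex_of_real (b i) * v (Suc i) else 0)"
proof -
  have "mat_vec N (jacobi_matrix N a b) v i = (\<Sum>j\<le>N. (if j = i then complex_of_real (a i) * v i else 0)
     + (if j = Suc i then complex_of_real (b i) * v j else 0)
     + (if j = i - 1 \<and> i > 0 then complex_of_real (b j) * v j else 0))"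
    unfolding mat_vec_def jacobi_matrix_def using assms by (intro sum.cong) auto
  also have "\<dots> = (if i = 0 then 0 else complex_of_real (b (i - 1)) * v (i - 1)) + complex_of_real (a i) * v i
    + (if i < N then complex_of_real (b i) * v (Suc i) else 0)"
    unfolding sum.distrib using assms by (simp add: sum.delta cong: if_cong; arith)
  finally show ?thesis .
qed

lemma mat_vec_out: "i > N \<Longrightarrow> mat_vec N (jacobi_matrix N a b) v i = 0"
  unfolding mat_vec_def jacobi_matrix_def by simp

lemma mat_vec_sum: "mat_vec N M (\<lambda>i. \<Sum>k\<in>A. f k i) = (\<lambda>i. \<Sum>k\<in>A. mat_vec N M (f k) i)"
  unfolding mat_vec_def by (rule ext) (simp add: sum_distrib_left sum.swap[of _ A])

lemma mat_vec_scale: "mat_vec N M (\<lambda>i. c * f i) = (\<lambda>i. c * mat_vec N M f i)"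
  unfolding mat_vec_def by (rule ext) (simp add: sum_distrib_left mult_ac)

context lanczos begin

definition u :: "nat \<Rightarrow> nat \<Rightarrow> complex" where
  "u k i = (if i \<le> N then complex_of_real (poly (P i) (x k)) else 0)"

lemma rec_eval:
  assumes "k \<le> N" "i \<le> N"
  shows "x k * poly (P i) (x k) = (if i = 0 then 0 else b (i - 1) * poly (P (i - 1)) (x k))
     + a i * poly (P i) (x k) + (if i < N then b i * poly (P (Suc i)) (x k) else 0)"
proof (cases "i < N")
  case True
  have "poly ([:0,1:] * P i) (x k) = poly (R i + smult (a i) (P i) + (if i = 0 then 0 else smult (b (i - 1)) (P (i - 1)))) (x k)"
    by (subst XP_eq) simp
  then show ?thesis using RN[OF True] True by (auto simp: algebra_simps)
next
  case False
  then have iN: "i = N" using assms by simp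
  have "0 = poly (R N) (x k)" using RN_vanish[OF assms(1)] by simp
  then show ?thesis unfolding R_def using iN by (auto simp: algebra_simps)
qed

lemma eigen:
  assumes "k \<le> N"
  shows "mat_vec N (jacobi_matrix N a b) (u k) = (\<lambda>i. complex_of_real (x k) * u k i)"
proof (rule ext)
  fix i
  show "mat_vec N (jacobi_matrix N a b) (u k) i = complex_of_real (x k) * u k i"
  proof (cases "i \<le> N")
    case True
    have "complex_of_real (x k) * u k i = complex_of_real (x k * poly (P i) (x k))"
      unfolding u_def using True by simp
    also have "\<dots> = mat_vec N (jacobi_matrix N a b) (u k) i"
      unfolding rec_eval[OF assms True] mat_vec_jacobi[OF True] u_def using True by auto
    finally show ?thesis by simp
  next
    case False
    then show ?thesis using mat_vec_out[of N i] by (simp add: u_def)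
  qed
qed

lemma e0_expand: "basis_vec 0 = (\<lambda>i. \<Sum>k\<le>N. complex_of_real (w k) * u k i)"
proof (rule ext)
  fix i
  show "basis_vec 0 i = (\<Sum>k\<le>N. complex_of_real (w k) * u k i)"
  proof (cases "i \<le> N")
    case True
    have "(\<Sum>k\<le>N. complex_of_real (w k) * u k i) = complex_of_real (ip (P i) (P 0))"
      unfolding ip_def ipv_def u_def using True by simp
    also have "\<dots> = basis_vec 0 i" using orthN[of i 0] True by (simp add: basis_vec_def)
    finally show ?thesis by simp
  next
    case False then show ?thesis by (simp add: u_def basis_vec_def)
  qed
qed

lemma pow_e0: "(mat_vec N (jacobi_matrix N a b) ^^ j) (basis_vec 0) =
   (\<lambda>i. \<Sum>k\<le>N. complex_of_real (w k) * complex_of_real (x k) ^ j * u k i)"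
proof (induction j)
  case 0 then show ?case using e0_expand by simp
next
  case (Suc j)
  have "(mat_vec N (jacobi_matrix N a b) ^^ Suc j) (basis_vec 0)
     = mat_vec N (jacobi_matrix N a b) (\<lambda>i. \<Sum>k\<le>N. complex_of_real (w k) * complex_of_real (x k) ^ j * u k i)"
    using Suc by simp
  also have "\<dots> = (\<lambda>i. \<Sum>k\<le>N. complex_of_real (w k) * complex_of_real (x k) ^ j * mat_vec N (jacobi_matrix N a b) (u k) i)"
    unfolding mat_vec_sum by (simp add: mat_vec_scale[of N _ _ "u _", simplified])
  also have "\<dots> = (\<lambda>i. \<Sum>k\<le>N. complex_of_real (w k) * complex_of_real (x k) ^ Suc j * u k i)"
    by (rule ext, rule sum.cong) (auto simp: eigen)
  finally show ?case .
qed

lemma evol_e0: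
  "evol N (jacobi_matrix N a b) t (basis_vec 0) i =
     (\<Sum>k\<le>N. complex_of_real (w k) * u k i * exp (- \<i> * complex_of_real t * complex_of_real (x k)))"
proof -
  have pm: "\<And>(z::complex) y n. (- (z * y)) ^ n = (- z) ^ n * y ^ n"
    by (metis mult_minus_left power_mult_distrib)
  have "(\<lambda>n. (- \<i> * complex_of_real t) ^ n / of_nat (fact n) * (mat_vec N (jacobi_matrix N a b) ^^ n) (basis_vec 0) i)
     = (\<lambda>n. \<Sum>k\<le>N. complex_of_real (w k) * u k i * ((- \<i> * complex_of_real t * complex_of_real (x k)) ^ n /\<^sub>R fact n))"
    unfolding pow_e0
    by (rule ext) (simp add: sum_distrib_left scaleR_conv_of_real divide_inverse pm power_mult_distrib mult_ac)
  also have "\<dots> sums (\<Sum>k\<le>N. complex_of_real (w k) * u k i * exp (- \<i> * complex_of_real t * complex_of_real (x k)))"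
    by (intro sums_sum sums_mult exp_converges)
  finally show ?thesis unfolding evol_def by (rule sums_unique[symmetric])
qed

end



lemma jacobi_sym: "jacobi_matrix N a b i j = jacobi_matrix N a b j i"
  unfolding jacobi_matrix_def by auto

context lanczos begin

abbreviation J where "J \<equiv> jacobi_matrix N a b"

definition G :: "nat \<Rightarrow> nat \<Rightarrow> complex" where
  "G k l = (\<Sum>i\<le>N. u k i * u l i)"

lemma G_orth:
  assumes "k \<le> N" "l \<le> N" "k \<noteq> l"
  shows "G k l = 0"
proof -
  have "complex_of_real (x k) * G k l = (\<Sum>i\<le>N. mat_vec N J (u k) i * u l i)"
    unfolding G_def eigen[OF assms(1)] by (simp add: sum_distrib_left mult_ac)
  also have "\<dots> = (\<Sum>i\<le>N. \<Sum>j\<le>N. complex_of_real (J i j) * u k j * u l i)"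
    unfolding mat_vec_def by (simp add: sum_distrib_right)
  also have "\<dots> = (\<Sum>j\<le>N. \<Sum>i\<le>N. complex_of_real (J j i) * u l i * u k j)"
    by (subst sum.swap) (simp add: jacobi_sym[of N a b] mult_ac)
  also have "\<dots> = (\<Sum>j\<le>N. mat_vec N J (u l) j * u k j)"
    unfolding mat_vec_def by (simp add: sum_distrib_right)
  also have "\<dots> = complex_of_real (x l) * G k l"
    unfolding G_def eigen[OF assms(2)] by (simp add: sum_distrib_left mult_ac)
  finally have "(complex_of_real (x k) - complex_of_real (x l)) * G k l = 0"
    by (simp add: algebra_simps)
  moreover have "x k \<noteq> x l" using x_inj assms by (auto simp: inj_on_def)
  ultimately show ?thesis by simp
qed

definition g :: "nat \<Rightarrow> real" where
  "g l = (\<Sum>i\<le>N. poly (P i) (x l) * poly (P i) (x l))"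

lemma G_self: "G l l = complex_of_real (g l)"
  unfolding G_def g_def u_def by simp

lemma g_pos: "g l > 0"
proof -
  have "(1::real) = poly (P 0) (x l) * poly (P 0) (x l)" by simp
  also have "\<dots> \<le> g l" unfolding g_def by (rule member_le_sum) auto
  finally show ?thesis by simp
qed

definition E :: "real \<Rightarrow> nat \<Rightarrow> complex" where
  "E t k = exp (- \<i> * complex_of_real t * complex_of_real (x k))"

lemma evol_E: "evol N J t (basis_vec 0) i = (\<Sum>k\<le>N. complex_of_real (w k) * u k i * E t k)"
  unfolding E_def by (rule evol_e0)

lemma PST_E:
  assumes "PST N J T"
  shows "\<exists>\<phi>. \<forall>l\<le>N. E T l = exp (\<i> * complex_of_real \<phi>) * complex_of_real (poly (P N) (x l) / (w l * g l))"
proof -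
  obtain \<phi> where phi: "\<forall>i\<le>N. evol N J T (basis_vec 0) i = exp (\<i> * complex_of_real \<phi>) * basis_vec N i"
    using assms(1) unfolding PST_def by blast
  have "E T l = exp (\<i> * complex_of_real \<phi>) * complex_of_real (poly (P N) (x l) / (w l * g l))" if l: "l \<le> N" for l
  proof -
  have "(\<Sum>i\<le>N. evol N J T (basis_vec 0) i * u l i) = (\<Sum>i\<le>N. exp (\<i> * complex_of_real \<phi>) * basis_vec N i * u l i)"
    using phi by simp
  also have "\<dots> = (\<Sum>i\<le>N. if i = N then exp (\<i> * complex_of_real \<phi>) * u l N else 0)"
    by (rule sum.cong) (auto simp: basis_vec_def)
  also have "\<dots> = exp (\<i> * complex_of_real \<phi>) * u l N" by simp
  finally have 1: "(\<Sum>i\<le>N. evol N J T (basis_vec 0) i * u l i) = exp (\<i> * complex_of_real \<phi>) * complex_of_real (poly (P N) (x l))"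
    by (simp add: u_def)
  have "(\<Sum>i\<le>N. evol N J T (basis_vec 0) i * u l i) = (\<Sum>i\<le>N. \<Sum>k\<le>N. (complex_of_real (w k) * E T k) * (u k i * u l i))"
    unfolding evol_E sum_distrib_right by (simp add: mult_ac)
  also have "\<dots> = (\<Sum>k\<le>N. \<Sum>i\<le>N. (complex_of_real (w k) * E T k) * (u k i * u l i))"
    by (rule sum.swap)
  also have "\<dots> = (\<Sum>k\<le>N. complex_of_real (w k) * E T k * G k l)"
    unfolding G_def by (simp add: sum_distrib_left)
  also have "\<dots> = (\<Sum>k\<le>N. if k = l then complex_of_real (w l) * E T l * G l l else 0)"
    by (rule sum.cong) (auto simp: G_orth l)
  also have "\<dots> = complex_of_real (w l * g l) * E T l" using l by (simp add: G_self)
  finally have "complex_of_real (w l * g l) * E T l = exp (\<i> * complex_of_real \<phi>) * complex_of_real (poly (P N) (x l))"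
    using 1 by simp
  moreover have "w l * g l > 0" using w_pos[OF l] g_pos by simp
  then have nz: "complex_of_real (w l * g l) \<noteq> 0" by (metis of_real_eq_0_iff less_irrefl)
  ultimately have "E T l = exp (\<i> * complex_of_real \<phi>) * complex_of_real (poly (P N) (x l)) / complex_of_real (w l * g l)"
    by (metis nonzero_mult_div_cancel_left)
  then show "E T l = exp (\<i> * complex_of_real \<phi>) * complex_of_real (poly (P N) (x l) / (w l * g l))"
    by simp
  qed
  then show ?thesis by blast
qed

lemma noPST:
  assumes "l < N" "x (Suc l) = x l + 1" "0 < T" "T < pi"
  shows "\<not> PST N J T"
proof
  assume pst: "PST N J T"
  obtain \<phi> where e: "\<forall>l\<le>N. E T l = exp (\<i> * complex_of_real \<phi>) * complex_of_real (poly (P N) (x l) / (w l * g l))"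
    using PST_E[OF pst] by blast
  define \<rho> where "\<rho> l = poly (P N) (x l) / (w l * g l)" for l
  have e1: "E T l = exp (\<i> * complex_of_real \<phi>) * complex_of_real (\<rho> l)" using e assms(1) \<rho>_def by simp
  have e2: "E T (Suc l) = exp (\<i> * complex_of_real \<phi>) * complex_of_real (\<rho> (Suc l))" using e assms(1) \<rho>_def by simp
  have "E T (Suc l) = E T l * exp (- \<i> * complex_of_real T)"
    unfolding E_def assms(2) by (simp add: exp_add[symmetric] algebra_simps)
  then have "complex_of_real (\<rho> (Suc l)) = complex_of_real (\<rho> l) * exp (- \<i> * complex_of_real T)"
    using e1 e2 by simp
  moreover have "\<rho> l \<noteq> 0" using e1 unfolding E_def by auto
  ultimately have "exp (- \<i> * complex_of_real T) = complex_of_real (\<rho> (Suc l) / \<rho> l)"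
    by (simp add: field_simps)
  then have "Im (exp (- \<i> * complex_of_real T)) = 0" by simp
  then have "sin T = 0" by (simp add: Im_exp)
  moreover have "sin T > 0" using assms(3,4) by (rule sin_gt_zero)
  ultimately show False by simp
qed

lemma unimod_exp: "norm (z::complex) = 1 \<Longrightarrow> \<exists>\<phi>::real. z = exp (\<i> * complex_of_real \<phi>)"
  by (metis complex_unimodular_polar cis.code cis_conv_exp)

lemma PST_yes:
  assumes E: "\<forall>k\<le>N. E pi k = \<gamma> * complex_of_real (s k)" and g1: "norm \<gamma> = 1"
    and orth: "\<forall>q. degree q < N \<longrightarrow> ipv s q = 0"
    and norm: "(\<Sum>k\<le>N. w k * s k * s k) = 1"
  shows "PST N J pi"
proof -
  obtain c where c: "c = 1 \<or> c = -1" "\<forall>k\<le>N. s k = c * poly (P N) (x k)"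
    using PN_vector[OF orth norm] by blast
  have "norm (\<gamma> * complex_of_real c) = 1" using g1 c(1) by (auto simp: norm_mult)
  then obtain \<phi> where phi: "\<gamma> * complex_of_real c = exp (\<i> * complex_of_real \<phi>)"
    using unimod_exp by blast
  have "evol N J pi (basis_vec 0) i = exp (\<i> * complex_of_real \<phi>) * basis_vec N i" if i: "i \<le> N" for i
  proof -
    have "evol N J pi (basis_vec 0) i = (\<Sum>k\<le>N. (\<gamma> * complex_of_real c) * complex_of_real (w k * poly (P i) (x k) * poly (P N) (x k)))"
      unfolding evol_E using E c(2) i by (intro sum.cong) (auto simp: u_def mult_ac)
    also have "\<dots> = (\<gamma> * complex_of_real c) * complex_of_real (ip (P i) (P N))"
      unfolding ip_def ipv_def by (simp add: sum_distrib_left)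
    also have "\<dots> = exp (\<i> * complex_of_real \<phi>) * basis_vec N i"
      using orthN[OF i, of N] phi by (simp add: basis_vec_def)
    finally show ?thesis .
  qed
  then show ?thesis unfolding PST_def by auto
qed

lemma ESE_val: "inner_C N (evol N J t (basis_vec 0)) (basis_vec 0) = (\<Sum>k\<le>N. complex_of_real (w k) * E t k)"
proof -
  have "inner_C N (evol N J t (basis_vec 0)) (basis_vec 0) = evol N J t (basis_vec 0) 0"
    unfolding inner_C_def basis_vec_def by (simp add: if_distrib cong: if_cong)
  also have "\<dots> = (\<Sum>k\<le>N. complex_of_real (w k) * E t k)"
    unfolding evol_E by (simp add: u_def)
  finally show ?thesis .
qed

end


definition pd :: "nat \<Rightarrow> (nat \<Rightarrow> real) \<Rightarrow> nat \<Rightarrow> real" where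
  "pd N x k = (\<Prod>l\<in>{..N}-{k}. x k - x l)"

lemma sign_pd:
  assumes mono: "\<And>i j. i < j \<Longrightarrow> j \<le> N \<Longrightarrow> x i < x j" and k: "k \<le> N"
  shows "(-1) ^ (N - k) * pd N x k > 0"
proof -
  have split: "{..N} - {k} = {..<k} \<union> {k<..N}" using k by auto
  have "pd N x k = (\<Prod>l\<in>{..<k}. x k - x l) * (\<Prod>l\<in>{k<..N}. - (x l - x k))"
    unfolding pd_def split by (subst prod.union_disjoint) auto
  also have "(\<Prod>l\<in>{k<..N}. - (x l - x k)) = (-1) ^ (N - k) * (\<Prod>l\<in>{k<..N}. x l - x k)"
    by (subst prod_uminus) simp
  finally have "(-1) ^ (N - k) * pd N x k = ((-1) ^ (N - k) * (-1) ^ (N - k)) * ((\<Prod>l\<in>{..<k}. x k - x l) * (\<Prod>l\<in>{k<..N}. x l - x k))"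
    by (simp add: mult_ac)
  also have "(-1::real) ^ (N - k) * (-1) ^ (N - k) = 1" by (simp add: power_add[symmetric])
  finally have eq: "(-1) ^ (N - k) * pd N x k = (\<Prod>l\<in>{..<k}. x k - x l) * (\<Prod>l\<in>{k<..N}. x l - x k)"
    by simp
  have "(\<Prod>l\<in>{..<k}. x k - x l) * (\<Prod>l\<in>{k<..N}. x l - x k) > 0"
    using mono k by (intro mult_pos_pos prod_pos) auto
  then show ?thesis using eq by simp
qed

lemma pd_sym:
  assumes sym: "\<And>k. k \<le> N \<Longrightarrow> x (N - k) = - x k" and k: "k \<le> N"
  shows "pd N x (N - k) = (-1) ^ N * pd N x k"
proof -
  have "pd N x (N - k) = (\<Prod>l\<in>{..N}-{k}. x (N - k) - x (N - l))"
    unfolding pd_def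
    by (rule prod.reindex_bij_witness[where i="\<lambda>l. N - l" and j="\<lambda>l. N - l"]) (use k in auto)
  also have "\<dots> = (\<Prod>l\<in>{..N}-{k}. - (x k - x l))"
    by (rule prod.cong) (use sym k in auto)
  also have "\<dots> = (-1) ^ N * pd N x k"
    unfolding pd_def using k by (subst prod_uminus) (simp add: card_Diff_singleton)
  finally show ?thesis .
qed

lemma sign_change:
  fixes h :: "real \<Rightarrow> real"
  assumes "continuous_on UNIV h" "a < b" "h a * h b < 0"
  shows "\<exists>z. a < z \<and> z < b \<and> h z = 0"
proof -
  have c: "continuous_on {a..b} h" using assms(1) continuous_on_subset by blast
  have "\<exists>z. a \<le> z \<and> z \<le> b \<and> h z = 0"
  proof (cases "h a < 0")
    case True
    then have "h b > 0" using assms(3) by (simp add: mult_less_0_iff)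
    then show ?thesis using IVT'[of h a 0 b] True c assms(2) by auto
  next
    case False
    then have "h a > 0" "h b < 0" using assms(3) by (auto simp: mult_less_0_iff)
    then show ?thesis using IVT2'[of h b 0 a] c assms(2) by auto
  qed
  then obtain z where "a \<le> z" "z \<le> b" "h z = 0" by blast
  moreover have "h a \<noteq> 0" "h b \<noteq> 0" using assms(3) by auto
  ultimately show ?thesis by (metis order.order_iff_strict)
qed



locale constr =
  fixes n m :: nat
  assumes n1: "n > 1" and m0: "m > 0"
begin

abbreviation NN where "NN \<equiv> 2 * n - 1"
definition KK :: nat where "KK = 2 * m * n"
definition xs :: "nat \<Rightarrow> real" where
  "xs k = real k - real n + 1/2 + (if n \<le> k then real KK else - real KK)"
definition vv :: "nat \<Rightarrow> real" where "vv k = (-1) ^ (NN - k) / pd NN xs k"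
definition ZZ :: real where "ZZ = (\<Sum>k\<le>NN. vv k)"
definition ww :: "nat \<Rightarrow> real" where "ww k = vv k / ZZ"

lemma xs_mono: "i < j \<Longrightarrow> j \<le> NN \<Longrightarrow> xs i < xs j"
proof -
  assume "i < j"
  then have "real i < real j" by simp
  moreover have "0 \<le> real KK" by simp
  ultimately show ?thesis unfolding xs_def using \<open>i < j\<close> by auto
qed

lemma xs_inj: "inj_on xs {..NN}"
  by (rule inj_onI) (metis atMost_iff less_irrefl linorder_neqE_nat xs_mono)

lemma NN_odd: "k \<le> NN \<Longrightarrow> (-1::real) ^ (NN - k) = - ((-1) ^ k)"
proof -
  assume k: "k \<le> NN"
  have e: "NN - k + k = NN" using k by simp
  have "(-1::real) ^ (NN - k) * (-1) ^ k = (-1) ^ NN" by (simp only: power_add[symmetric] e)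
  also have "\<dots> = -1" using n1 by (simp add: odd_pos)
  finally show ?thesis by (metis minus_one_mult_self mult.assoc mult_minus1_right mult.right_neutral mult.commute)
qed

lemma xs_sym: "k \<le> NN \<Longrightarrow> xs (NN - k) = - xs k"
  unfolding xs_def using n1 by (auto simp: of_nat_diff)

lemma vv_pos: "k \<le> NN \<Longrightarrow> vv k > 0"
  using sign_pd[of NN xs k] xs_mono unfolding vv_def by (simp add: zero_less_mult_iff zero_less_divide_iff)

lemma ZZ_pos: "ZZ > 0"
  unfolding ZZ_def using vv_pos by (intro sum_pos) auto

lemma ww_pos: "k \<le> NN \<Longrightarrow> ww k > 0"
  unfolding ww_def using vv_pos ZZ_pos by simp

lemma ww_sum: "(\<Sum>k\<le>NN. ww k) = 1"
  unfolding ww_def using ZZ_pos by (simp add: sum_divide_distrib[symmetric] ZZ_def)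

lemma lz: "lanczos NN xs ww"
  by unfold_locales (use xs_inj ww_pos ww_sum in auto)

lemma ww_sym: "k \<le> NN \<Longrightarrow> ww (NN - k) = ww k"
proof -
  assume k: "k \<le> NN"
  have "pd NN xs (NN - k) = - pd NN xs k"
    using pd_sym[of NN xs k] xs_sym k n1 by (simp add: odd_pos)
  moreover have "NN - (NN - k) = k" using k by simp
  ultimately show ?thesis unfolding ww_def vv_def using NN_odd[OF k] by simp
qed

lemma xs_shift: "xs k = xs 0 + real (k + (if n \<le> k then 2 * KK else 0))"
  unfolding xs_def using n1 by auto

lemma pst_pi: "PST NN (jacobi_matrix NN (lanczos.a NN xs ww) (lanczos.b NN xs ww)) pi"
proof -
  interpret lanczos NN xs ww by (rule lz)
  define s where "s k = (-1::real) ^ (NN - k)" for k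
  define \<gamma> where "\<gamma> = - exp (- \<i> * complex_of_real pi * complex_of_real (xs 0))"
  have ss: "s k * s k = 1" for k unfolding s_def by (simp add: power_add[symmetric])
  have "E pi k = \<gamma> * complex_of_real (s k)" if k: "k \<le> NN" for k
  proof -
    define d where "d = k + (if n \<le> k then 2 * KK else 0)"
    have "E pi k = exp (- \<i> * complex_of_real pi * complex_of_real (xs 0)) * exp (of_nat d * (- \<i> * complex_of_real pi))"
      unfolding E_def by (subst xs_shift) (simp add: d_def[symmetric] exp_add[symmetric] algebra_simps)
    also have "exp (of_nat d * (- \<i> * complex_of_real pi)) = (-1) ^ d"
      unfolding exp_of_nat_mult by (simp add: exp_minus)
    also have "(-1::complex) ^ d = (-1) ^ k" unfolding d_def by (simp add: power_add)
    also have "(-1::complex) ^ k = - complex_of_real (s k)"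
      unfolding s_def NN_odd[OF k] by simp
    finally show ?thesis unfolding \<gamma>_def by simp
  qed
  moreover have "norm \<gamma> = 1" unfolding \<gamma>_def by (simp add: norm_exp_eq_Re)
  moreover have "\<forall>q. degree q < NN \<longrightarrow> ipv s q = 0"
  proof (intro allI impI)
    fix q :: "real poly" assume dq: "degree q < NN"
    have "ipv s q = (\<Sum>k\<le>NN. (1 / ZZ) * (poly q (xs k) / poly (L k) (xs k)))"
      unfolding ipv_def ww_def vv_def
    proof (intro sum.cong refl)
      fix k assume "k \<in> {..NN}"
      have "poly (L k) (xs k) = pd NN xs k" unfolding polyL pd_def ..
      then show "(-1) ^ (NN - k) / pd NN xs k / ZZ * s k * poly q (xs k) = 1 / ZZ * (poly q (xs k) / poly (L k) (xs k))"
        using ss[of k] unfolding s_def by (simp add: field_simps)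
    qed
    also have "\<dots> = 0" unfolding sum_distrib_left[symmetric] lagrange[OF dq] by simp
    finally show "ipv s q = 0" .
  qed
  moreover have "(\<Sum>k\<le>NN. ww k * s k * s k) = 1" using ww_sum ss by (simp add: mult.assoc)
  ultimately show ?thesis by (intro PST_yes[of \<gamma> s]) auto
qed

lemma nopst: "0 < T \<Longrightarrow> T < pi \<Longrightarrow> \<not> PST NN (jacobi_matrix NN (lanczos.a NN xs ww) (lanczos.b NN xs ww)) T"
proof -
  assume T: "0 < T" "T < pi"
  interpret lanczos NN xs ww by (rule lz)
  have "n < NN" using n1 by simp
  moreover have "xs (Suc n) = xs n + 1" unfolding xs_def by simp
  ultimately show ?thesis using noPST T by blast
qed

definition hh :: "real \<Rightarrow> real" where "hh t = (\<Sum>k\<le>NN. ww k * cos (t * xs k))"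

lemma sin_sum0: "(\<Sum>k\<le>NN. ww k * sin (t * xs k)) = 0"
proof -
  have "(\<Sum>k\<le>NN. ww k * sin (t * xs k)) = (\<Sum>k\<le>NN. ww (NN - k) * sin (t * xs (NN - k)))"
    by (rule sum.reindex_bij_witness[where i="\<lambda>l. NN - l" and j="\<lambda>l. NN - l"]) (use n1 in auto)
  also have "\<dots> = - (\<Sum>k\<le>NN. ww k * sin (t * xs k))"
    unfolding sum_negf[symmetric]
  proof (rule sum.cong[OF refl])
    fix k assume "k \<in> {..NN}"
    then have "ww (NN - k) = ww k" "xs (NN - k) = - xs k" using ww_sym xs_sym by auto
    then show "ww (NN - k) * sin (t * xs (NN - k)) = - (ww k * sin (t * xs k))" by simp
  qed
  finally show ?thesis by simp
qed

lemma ese_val: "inner_C NN (evol NN (jacobi_matrix NN (lanczos.a NN xs ww) (lanczos.b NN xs ww)) t (basis_vec 0)) (basis_vec 0)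
   = complex_of_real (hh t)"
proof -
  interpret lanczos NN xs ww by (rule lz)
  have Ek: "E t k = complex_of_real (cos (t * xs k)) - \<i> * complex_of_real (sin (t * xs k))" for k
    unfolding E_def by (simp add: complex_eq_iff Re_exp Im_exp)
  have "inner_C NN (evol NN J t (basis_vec 0)) (basis_vec 0)
     = complex_of_real (hh t) - \<i> * complex_of_real (\<Sum>k\<le>NN. ww k * sin (t * xs k))"
    unfolding ESE_val Ek hh_def by (simp add: algebra_simps sum_subtractf sum_distrib_left)
  moreover have "complex_of_real (\<Sum>k\<le>NN. ww k * sin (t * xs k)) = 0" using sin_sum0 by simp
  ultimately show ?thesis by simp
qed

definition X0 :: real where "X0 = real KK + real n / 2"
definition tt :: "nat \<Rightarrow> real" where "tt j = real j * pi / X0"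
definition cc :: "nat \<Rightarrow> real" where "cc k = (if n \<le> k then xs k - X0 else - xs k - X0)"
definition AA :: "nat \<Rightarrow> real" where "AA j = (\<Sum>k\<le>NN. ww k * cos (tt j * cc k))"

lemma X0_pos: "X0 > real m"
proof -
  have "real m * 1 \<le> real m * (2 * real n)" using n1 by (intro mult_left_mono) auto
  then have "real m \<le> real KK" unfolding KK_def by simp
  then show ?thesis unfolding X0_def using n1 by simp
qed

lemma hh_tt: "hh (tt j) = (-1) ^ j * AA j"
proof -
  have "cos (tt j * xs k) = (-1) ^ j * cos (tt j * cc k)" for k
  proof -
    have X: "tt j * X0 = real j * pi" unfolding tt_def using X0_pos by simp
    have "cos (tt j * xs k) = cos (tt j * (X0 + cc k))"
      unfolding cc_def by (cases "n \<le> k") simp_all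
    also have "\<dots> = cos (real j * pi + tt j * cc k)" by (simp add: distrib_left X)
    also have "\<dots> = (-1) ^ j * cos (tt j * cc k)" by (simp add: cos_add)
    finally show ?thesis .
  qed
  then show ?thesis unfolding hh_def AA_def by (simp add: sum_distrib_left mult_ac)
qed

lemma cc_bound: "k \<le> NN \<Longrightarrow> \<bar>cc k\<bar> \<le> (real n - 1) / 2"
proof -
  assume k: "k \<le> NN"
  then have "real k \<le> 2 * real n - 1" using n1 by linarith
  show ?thesis
  proof (cases "n \<le> k")
    case True
    then have "real n \<le> real k" by simp
    moreover have "cc k = real k + 1/2 - 3 * real n / 2" using True unfolding cc_def xs_def X0_def by simp
    ultimately have "cc k \<le> (real n - 1) / 2 \<and> - cc k \<le> (real n - 1) / 2"
      using \<open>real k \<le> 2 * real n - 1\<close> by auto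
    then show ?thesis by (simp only: abs_le_iff)
  next
    case False
    then have "real k + 1 \<le> real n" by simp
    moreover have "cc k = real n / 2 - 1/2 - real k" using False unfolding cc_def xs_def X0_def by simp
    ultimately have "cc k \<le> (real n - 1) / 2 \<and> - cc k \<le> (real n - 1) / 2"
      by auto
    then show ?thesis by (simp only: abs_le_iff)
  qed
qed

lemma AA_pos: "j \<le> m \<Longrightarrow> AA j > 0"
proof -
  assume j: "j \<le> m"
  have "ww k * cos (tt j * cc k) > 0" if k: "k \<le> NN" for k
  proof -
    have t0: "tt j \<ge> 0" unfolding tt_def using X0_pos by simp
    have "\<bar>tt j * cc k\<bar> \<le> tt j * ((real n - 1) / 2)"
      using mult_left_mono[OF cc_bound[OF k] t0] t0 by (simp add: abs_mult)
    also have "\<dots> = (real j * (real n - 1)) * pi / (2 * X0)" unfolding tt_def by (simp add: field_simps)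
    also have "\<dots> < X0 * pi / (2 * X0)"
    proof -
      have "real j * (real n - 1) \<le> real m * (real n - 1)" using j n1 by (intro mult_right_mono) auto
      also have "\<dots> < real m * (2 * real n)" using m0 n1 by (intro mult_strict_left_mono) auto
      also have "\<dots> \<le> X0" unfolding X0_def KK_def by simp
      finally have "real j * (real n - 1) < X0" .
      then show ?thesis using X0_pos by (intro divide_strict_right_mono mult_strict_right_mono) auto
    qed
    also have "\<dots> = pi / 2" using X0_pos by simp
    finally have "\<bar>tt j * cc k\<bar> < pi / 2" .
    then have "cos (tt j * cc k) > 0" by (intro cos_gt_zero_pi) auto
    then show ?thesis using ww_pos[OF k] by simp
  qed
  then show ?thesis unfolding AA_def by (intro sum_pos) auto
qed

lemma zeros: "j \<in> {1..m} \<Longrightarrow> \<exists>z. tt (j - 1) < z \<and> z < tt j \<and> hh z = 0"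
proof -
  assume j: "j \<in> {1..m}"
  have cont: "continuous_on UNIV hh" unfolding hh_def by (intro continuous_intros)
  have lt: "tt (j - 1) < tt j" unfolding tt_def using X0_pos j by (intro divide_strict_right_mono) auto
  have "hh (tt (j - 1)) * hh (tt j) = ((-1) ^ (j - 1) * (-1) ^ j) * (AA (j - 1) * AA j)"
    unfolding hh_tt by (simp add: mult_ac)
  also have "(-1::real) ^ (j - 1) * (-1) ^ j = -1"
    using j by (cases j) auto
  moreover have "AA (j - 1) > 0" "AA j > 0" using AA_pos j by auto
  ultimately have "hh (tt (j - 1)) * hh (tt j) < 0" by simp
  then show ?thesis using sign_change[OF cont lt] by blast
qed

lemma tt_mono: "i \<le> j \<Longrightarrow> tt i \<le> tt j"
  unfolding tt_def using X0_pos by (intro divide_right_mono mult_right_mono) auto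

lemma tt_m: "tt m < pi"
proof -
  have "tt m = pi * (real m / X0)" unfolding tt_def by simp
  also have "\<dots> < pi * 1" using X0_pos m0 by (intro mult_strict_left_mono) auto
  finally show ?thesis by simp
qed

lemma main_ex: "\<exists>(a::nat \<Rightarrow> real) (b::nat \<Rightarrow> real) T0 S.
           is_jacobi NN b \<and>
           earliest_PST NN (jacobi_matrix NN a b) T0 \<and>
           card S = m \<and> (\<forall>t\<in>S. ESE NN (jacobi_matrix NN a b) T0 t)"
proof -
  interpret lanczos NN xs ww by (rule lz)
  have "\<forall>j\<in>{1..m}. \<exists>z. tt (j - 1) < z \<and> z < tt j \<and> hh z = 0"
    using zeros by blast
  then obtain Z where Z: "\<forall>j\<in>{1..m}. tt (j - 1) < Z j \<and> Z j < tt j \<and> hh (Z j) = 0"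
    by (rule bchoice[elim_format]) blast
  have inj: "inj_on Z {1..m}"
  proof (rule linorder_inj_onI)
    fix i j assume "i < j" "i \<in> {1..m}" "j \<in> {1..m}"
    then have "Z i < tt i" "tt i \<le> tt (j - 1)" "tt (j - 1) < Z j" using Z tt_mono by auto
    then show "Z i \<noteq> Z j" by simp
  qed auto
  have ese: "ESE NN J pi t" if tS: "t \<in> Z ` {1..m}" for t
  proof -
    obtain j where j: "j \<in> {1..m}" "t = Z j" using tS by blast
    have "0 \<le> tt (j - 1)" unfolding tt_def using X0_pos by simp
    then have "0 < t" using Z j by force
    moreover have "t < pi" using Z j tt_mono[of j m] tt_m by force
    moreover have "inner_C NN (evol NN J t (basis_vec 0)) (basis_vec 0) = 0"
      using ese_val[of t] Z j by simp
    ultimately show ?thesis unfolding ESE_def by simp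
  qed
  have "is_jacobi NN b" unfolding is_jacobi_def using bN by simp
  moreover have "earliest_PST NN J pi" unfolding earliest_PST_def using pst_pi nopst by blast
  moreover have "card (Z ` {1..m}) = m" using card_image[OF inj] by simp
  ultimately show ?thesis using ese by blast
qed

end

theorem mainTheorem5:
  fixes n m :: nat
  assumes "n > 1" and "m > 0"
  shows "\<exists>(a::nat \<Rightarrow> real) (b::nat \<Rightarrow> real) T0 S.
           is_jacobi (2*n-1) b \<and>
           earliest_PST (2*n-1) (jacobi_matrix (2*n-1) a b) T0 \<and>
           card S = m \<and> (\<forall>t\<in>S. ESE (2*n-1) (jacobi_matrix (2*n-1) a b) T0 t)"
  using constr.main_ex[OF constr.intro[OF assms]] .



end
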